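(* Let $n\geq 2$ and $q=2^m\geq 4$. Let $B_n\in\mathrm{GL}_{n+1}(\mathbb{F}_q)$ be the matrix $E_{1,2}+E_{2,3}+\cdots+E_{n,n+1}+E_{n+1,1}$, where $E_{i,j}$ is the $(n+1)\times(n+1)$ matrix with $1$ in entry $(i,j)$ and $0$ elsewhere. Then the permutation of $\mathbb{P}^n(\mathbb{F}_q)$ induced by $B_n$ (acting on column vectors of homogeneous coordinates) is even. *)

theory Defs
  imports "HOL-Combinatorics.Permutations"
begin

text \<open>Vectors in F^(n+1) are functions nat => F supported on {0..n}
 (coordinate i here corresponds to coordinate i+1 in the paper).\<close>
definition vecs :: "nat \<Rightarrow> (nat \<Rightarrow> 'a::field) set" where
  "vecs n = {v. \<forall>i>n. v i = 0}"

definition proj_pt :: "(nat \<Rightarrow> 'a::field) \<Rightarrow> (nat \<Rightarrow> 'a) set" where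
  "proj_pt v = {(\<lambda>i. c * v i) | c. c \<noteq> 0}"

definition proj_space :: "nat \<Rightarrow> ((nat \<Rightarrow> 'a::field) set) set" where
  "proj_space n = proj_pt ` (vecs n - {(\<lambda>_. 0)})"

text \<open>The matrix B_n = E_{1,2}+...+E_{n,n+1}+E_{n+1,1}, 0-indexed: entry (i,j) is 1 iff j = i+1 mod (n+1).\<close>
definition Bmat :: "nat \<Rightarrow> nat \<Rightarrow> nat \<Rightarrow> 'a::field" where
  "Bmat n i j = (if i \<le> n \<and> j \<le> n \<and> j = Suc i mod Suc n then 1 else 0)"

definition mat_vec :: "nat \<Rightarrow> (nat \<Rightarrow> nat \<Rightarrow> 'a::field) \<Rightarrow> (nat \<Rightarrow> 'a) \<Rightarrow> (nat \<Rightarrow> 'a)" where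
  "mat_vec n A v = (\<lambda>i. if i \<le> n then (\<Sum>j\<le>n. A i j * v j) else 0)"

text \<open>Map on P^n induced by a matrix (identity outside P^n, so it is a permutation of the type).\<close>
definition induced_perm :: "nat \<Rightarrow> (nat \<Rightarrow> nat \<Rightarrow> 'a::field)
     \<Rightarrow> (nat \<Rightarrow> 'a) set \<Rightarrow> (nat \<Rightarrow> 'a) set" where
  "induced_perm n A S = (if S \<in> proj_space n then mat_vec n A ` S else S)"

end

theory Submission
  imports Defs "HOL-Number_Theory.Residues" "HOL-Computational_Algebra.Computational_Algebra"
begin

lemma char2:
  assumes "card (UNIV :: 'a::{field,finite} set) = 2 ^ m" "m > 0"
  shows "(2::'a) = 0"
proof -
  have pos: "CHAR('a) > 0" by (rule finite_imp_CHAR_pos) simp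
  have pr: "prime CHAR('a)" using prime_CHAR_semidom[OF pos] .
  have "CHAR('a) dvd 2 ^ m" using CHAR_dvd_CARD[where 'a='a] assms(1) by simp
  then have "CHAR('a) dvd 2" using pr prime_dvd_power by blast
  then have "CHAR('a) \<le> 2" by (rule dvd_imp_le) simp
  moreover have "CHAR('a) > 1" using pr prime_gt_1_nat by blast
  ultimately have c2: "CHAR('a) = 2" by linarith
  have "of_nat CHAR('a) = (0::'a)" by (rule of_nat_CHAR)
  then have "of_nat 2 = (0::'a)" unfolding c2 .
  then show ?thesis by simp
qed

lemma inv_even_aux:
  fixes \<tau> :: "'b \<Rightarrow> 'b"
  shows "\<And>\<tau>. card {x. \<tau> x \<noteq> x} = N \<Longrightarrow> finite {x. \<tau> x \<noteq> x} \<Longrightarrow> (\<forall>x. \<tau> (\<tau> x) = x) \<Longrightarrow>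
    (\<forall>y. \<tau> y \<noteq> y \<longrightarrow> \<tau> (\<iota> y) \<noteq> \<iota> y \<and> \<iota> (\<iota> y) = y \<and> \<iota> y \<noteq> y \<and> \<iota> y \<noteq> \<tau> y \<and> \<iota> (\<tau> y) = \<tau> (\<iota> y))
    \<Longrightarrow> evenperm \<tau>"
proof (induction N rule: less_induct)
  case (less N \<tau>)
  show ?case
  proof (cases "\<exists>x. \<tau> x \<noteq> x")
    case False
    then have "\<tau> = id" by auto
    then show ?thesis by simp
  next
    case True
    then obtain a where a: "\<tau> a \<noteq> a" by blast
    define b where "b = \<tau> a"
    define c where "c = \<iota> a"
    define d where "d = \<tau> (\<iota> a)"
    have inv: "\<tau> (\<tau> x) = x" for x using less.prems(3) by blast
    have P: "\<tau> (\<iota> y) \<noteq> \<iota> y \<and> \<iota> (\<iota> y) = y \<and> \<iota> y \<noteq> y \<and> \<iota> y \<noteq> \<tau> y \<and> \<iota> (\<tau> y) = \<tau> (\<iota> y)"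
      if "\<tau> y \<noteq> y" for y using less.prems(4) that by blast
    note Pa = P[OF a]
    have Pc: "\<tau> (\<iota> a) \<noteq> \<iota> a" using Pa by blast
    note Pcc = P[OF Pc]
    have dist: "a \<noteq> b" "a \<noteq> c" "a \<noteq> d" "b \<noteq> c" "b \<noteq> d" "c \<noteq> d"
    proof -
      show "a \<noteq> b" using a b_def by simp
      show "a \<noteq> c" using Pa c_def by auto
      show "a \<noteq> d"
      proof
        assume "a = d"
        then have "\<tau> a = \<iota> a" using inv[of "\<iota> a"] d_def by simp
        then show False using Pa by simp
      qed
      show "b \<noteq> c" using Pa b_def c_def by auto
      show "b \<noteq> d"
      proof
        assume "b = d"
        then have "\<tau> (\<tau> a) = \<tau> (\<tau> (\<iota> a))" using b_def d_def by simp
        then show False using Pa inv[of a] inv[of "\<iota> a"] by simp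
      qed
      show "c \<noteq> d" using Pc c_def d_def by auto
    qed
    have tb: "\<tau> b = a" "\<tau> a = b" "\<tau> c = d" "\<tau> d = c" using inv unfolding b_def c_def d_def by auto
    have ib: "\<iota> a = c" "\<iota> c = a" "\<iota> b = d" "\<iota> d = b"
    proof -
      show "\<iota> a = c" using c_def by simp
      show "\<iota> c = a" using Pa c_def by simp
      show "\<iota> b = d" using Pa b_def d_def by simp
      have "\<iota> (\<tau> (\<iota> a)) = \<tau> (\<iota> (\<iota> a))" using Pcc by simp
      then show "\<iota> d = b" using Pa b_def d_def by simp
    qed
    have tQ: "\<tau> y \<in> {a,b,c,d} \<longleftrightarrow> y \<in> {a,b,c,d}" for y
    proof
      assume "\<tau> y \<in> {a,b,c,d}"
      then have "\<tau> (\<tau> y) \<in> {a,b,c,d}" using tb by auto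
      then show "y \<in> {a,b,c,d}" using inv[of y] by simp
    next
      assume "y \<in> {a,b,c,d}"
      then show "\<tau> y \<in> {a,b,c,d}" using tb by auto
    qed
    define \<tau>' where "\<tau>' = transpose a b \<circ> transpose c d \<circ> \<tau>"
    have t': "\<tau>' y = (if y \<in> {a,b,c,d} then y else \<tau> y)" for y
    proof (cases "y \<in> {a,b,c,d}")
      case True
      then show ?thesis using dist tb unfolding \<tau>'_def by (auto simp: transpose_def)
    next
      case False
      then have "\<tau> y \<notin> {a,b,c,d}" using tQ by blast
      then show ?thesis using False unfolding \<tau>'_def by (auto simp: transpose_def)
    qed
    have M': "{x. \<tau>' x \<noteq> x} = {x. \<tau> x \<noteq> x} - {a,b,c,d}" using t' by auto
    have fin': "finite {x. \<tau>' x \<noteq> x}" using M' less.prems(2) by simp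
    have lt: "card {x. \<tau>' x \<noteq> x} < N"
      unfolding M' less.prems(1)[symmetric]
      using less.prems(2) a by (intro psubset_card_mono) auto
    have inv': "\<forall>x. \<tau>' (\<tau>' x) = x"
    proof
      fix x show "\<tau>' (\<tau>' x) = x"
      proof (cases "x \<in> {a,b,c,d}")
        case True then show ?thesis using t' by simp
      next
        case False
        then have "\<tau> x \<notin> {a,b,c,d}" using tQ by blast
        then show ?thesis using False t' inv[of x] by simp
      qed
    qed
    have cond': "\<forall>y. \<tau>' y \<noteq> y \<longrightarrow> \<tau>' (\<iota> y) \<noteq> \<iota> y \<and> \<iota> (\<iota> y) = y \<and> \<iota> y \<noteq> y \<and> \<iota> y \<noteq> \<tau>' y \<and> \<iota> (\<tau>' y) = \<tau>' (\<iota> y)"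
    proof (intro allI impI)
      fix y assume y: "\<tau>' y \<noteq> y"
      have yn: "y \<notin> {a,b,c,d}" using y t'[of y] by auto
      have ty: "\<tau> y \<noteq> y" using y yn t'[of y] by simp
      have "\<iota> y \<notin> {a,b,c,d}"
      proof
        assume "\<iota> y \<in> {a,b,c,d}"
        then have "\<iota> (\<iota> y) \<in> {a,b,c,d}" using ib by auto
        then show False using yn P[OF ty] by simp
      qed
      moreover have "\<tau> y \<notin> {a,b,c,d}" using yn tQ by blast
      ultimately show "\<tau>' (\<iota> y) \<noteq> \<iota> y \<and> \<iota> (\<iota> y) = y \<and> \<iota> y \<noteq> y \<and> \<iota> y \<noteq> \<tau>' y \<and> \<iota> (\<tau>' y) = \<tau>' (\<iota> y)"
        using P[OF ty] t' yn by simp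
    qed
    have ev': "evenperm \<tau>'" by (rule less.IH[OF lt refl fin' inv' cond'])
    have eq: "\<tau> = transpose c d \<circ> (transpose a b \<circ> \<tau>')"
      unfolding \<tau>'_def by (simp add: fun_eq_iff)
    have p': "permutation \<tau>'"
    proof -
      have cc: "\<tau>' \<circ> \<tau>' = id" using inv' by (simp add: fun_eq_iff)
      have "bij \<tau>'" by (rule o_bij[OF cc cc])
      then show ?thesis unfolding permutation using fin' by blast
    qed
    have p2: "permutation (transpose a b \<circ> \<tau>')" by (rule permutation_compose[OF permutation_swap_id p'])
    have s1: "\<not> evenperm (transpose a b)" "\<not> evenperm (transpose c d)" using dist(1,6) by (simp_all only: evenperm_swap) simp_all
    have e2: "\<not> evenperm (transpose a b \<circ> \<tau>')"
      using evenperm_comp[OF permutation_swap_id p'] ev' s1(1) by blast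
    have "evenperm (transpose c d \<circ> (transpose a b \<circ> \<tau>'))"
      using evenperm_comp[OF permutation_swap_id p2] e2 s1(2) by blast
    then show ?thesis by (subst eq)
  qed
qed


definition V :: "(nat \<Rightarrow> nat) \<Rightarrow> (nat \<Rightarrow> 'a) \<Rightarrow> (nat \<Rightarrow> 'a)" where
  "V s v = (\<lambda>i. v (s i))"

definition ind :: "nat \<Rightarrow> ((nat \<Rightarrow> 'a::field) \<Rightarrow> (nat \<Rightarrow> 'a)) \<Rightarrow> (nat \<Rightarrow> 'a) set \<Rightarrow> (nat \<Rightarrow> 'a) set" where
  "ind n L S = (if S \<in> proj_space n then L ` S else S)"

definition good :: "nat \<Rightarrow> ((nat \<Rightarrow> 'a::field) \<Rightarrow> (nat \<Rightarrow> 'a)) \<Rightarrow> bool" where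
  "good n L \<longleftrightarrow> (\<forall>c v. L (\<lambda>i. c * v i) = (\<lambda>i. c * L v i)) \<and>
     (\<forall>v \<in> vecs n - {\<lambda>_. 0}. L v \<in> vecs n - {\<lambda>_. 0})"

lemma image_proj_pt:
  assumes "\<forall>c v. L (\<lambda>i. c * v i) = (\<lambda>i. c * L v i)"
  shows "L ` proj_pt v = proj_pt (L v)"
proof -
  have "L ` {(\<lambda>i. c * v i) | c. c \<noteq> 0} = {L (\<lambda>i. c * v i) | c. c \<noteq> 0}" by blast
  then show ?thesis unfolding proj_pt_def using assms by simp
qed

lemma proj_pt_eq:
  assumes "proj_pt v = proj_pt (w::nat \<Rightarrow> 'a::field)"
  shows "\<exists>c. c \<noteq> 0 \<and> w = (\<lambda>i. c * v i)"
proof -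
  have "w \<in> proj_pt w" unfolding proj_pt_def by (rule CollectI, rule exI[of _ 1]) auto
  then show ?thesis using assms unfolding proj_pt_def by auto
qed

lemma proj_spaceE:
  assumes "P \<in> proj_space n"
  obtains v where "v \<in> vecs n" "v \<noteq> (\<lambda>_. 0)" "P = proj_pt v"
  using assms unfolding proj_space_def by auto

lemma proj_space_vecs:
  assumes "P \<in> proj_space n" "x \<in> P"
  shows "x \<in> vecs n"
  using assms unfolding proj_space_def proj_pt_def vecs_def by auto

lemma finite_vecs: "finite (vecs n :: (nat \<Rightarrow> 'a::{field,finite}) set)"
proof -
  have "vecs n = {f :: nat \<Rightarrow> 'a. \<forall>x. (x \<in> {..n} \<longrightarrow> f x \<in> UNIV) \<and> (x \<notin> {..n} \<longrightarrow> f x = 0)}"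
    unfolding vecs_def by auto
  also have "finite \<dots>" by (rule finite_set_of_finite_funs) auto
  finally show ?thesis .
qed

lemma finite_proj_space: "finite (proj_space n :: (nat \<Rightarrow> 'a::{field,finite}) set set)"
  unfolding proj_space_def using finite_vecs[where 'a='a, of n] by (intro finite_imageI finite_Diff)

lemma ind_in:
  assumes "good n L" "P \<in> proj_space n"
  shows "ind n L P \<in> proj_space n"
proof -
  obtain v where v: "v \<in> vecs n" "v \<noteq> (\<lambda>_. 0)" "P = proj_pt v" using assms(2) by (rule proj_spaceE)
  have "ind n L P = proj_pt (L v)" using assms v image_proj_pt unfolding ind_def good_def by auto
  moreover have "L v \<in> vecs n - {\<lambda>_. 0}" using assms(1) v unfolding good_def by auto
  ultimately show ?thesis unfolding proj_space_def by auto
qed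

lemma ind_comp:
  assumes "good n L1"
  shows "ind n (L2 \<circ> L1) = ind n L2 \<circ> ind n L1"
proof
  fix P
  show "ind n (L2 \<circ> L1) P = (ind n L2 \<circ> ind n L1) P"
  proof (cases "P \<in> proj_space n")
    case True
    then have "ind n L1 P \<in> proj_space n" using ind_in assms by blast
    then show ?thesis using True unfolding ind_def by (simp add: image_comp)
  next
    case False
    then show ?thesis unfolding ind_def by simp
  qed
qed

lemma good_comp: "good n L1 \<Longrightarrow> good n L2 \<Longrightarrow> good n (L2 \<circ> L1)"
  unfolding good_def by auto

lemma ind_invol:
  assumes "good n L" "\<And>v. v \<in> vecs n \<Longrightarrow> L (L v) = v"
  shows "ind n L (ind n L P) = P"
proof (cases "P \<in> proj_space n")
  case True
  obtain v where v: "v \<in> vecs n" "v \<noteq> (\<lambda>_. 0)" "P = proj_pt v" using True by (rule proj_spaceE)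
  have h: "\<forall>c v. L (\<lambda>i. c * v i) = (\<lambda>i. c * L v i)" using assms(1) unfolding good_def by blast
  have "ind n L P = proj_pt (L v)" using True v image_proj_pt[OF h] unfolding ind_def by auto
  moreover have "proj_pt (L v) \<in> proj_space n" using ind_in[OF assms(1) True] calculation by simp
  ultimately show ?thesis using True v image_proj_pt[OF h] assms(2) unfolding ind_def by auto
next
  case False
  then show ?thesis unfolding ind_def by simp
qed

lemma ind_permutes:
  assumes "good n L" "\<And>v. v \<in> vecs n \<Longrightarrow> L (L v) = v"
  shows "ind n L permutes proj_space n"
proof (rule bij_imp_permutes)
  show "bij_betw (ind n L) (proj_space n) (proj_space n)"
    by (rule bij_betwI[of _ _ _ "ind n L"]) (use ind_in[OF assms(1)] ind_invol[OF assms] in auto)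
  show "\<And>x. x \<notin> proj_space n \<Longrightarrow> ind n L x = x" unfolding ind_def by simp
qed

lemma char2_c:
  fixes c x y :: "'a::field"
  assumes "(2::'a) = 0" "x = c * y" "y = c * x" "x \<noteq> y"
  shows False
proof -
  have "x \<noteq> 0 \<or> y \<noteq> 0" using assms(4) by auto
  moreover have "x = (c * c) * x" "y = (c * c) * y" using assms(2,3) by (simp_all add: mult.assoc)
  ultimately have cc: "c * c = 1" by (metis mult_cancel_right1)
  have "(c - 1) * (c - 1) = c * c - 2 * c + 1" by (simp add: algebra_simps)
  also have "\<dots> = 0" using cc assms(1) by simp
  finally have "c = 1" by simp
  then show False using assms by simp
qed

lemma char2_neg: "(2::'a::field) = 0 \<Longrightarrow> x + x = (0::'a)"
  by (metis mult_2 mult_zero_left)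

lemma char2_eq: "(2::'a::field) = 0 \<Longrightarrow> x + y = (0::'a) \<Longrightarrow> x = y"
  by (metis add_diff_cancel_right' char2_neg diff_0)

lemma swap_even:
  fixes a b n :: nat
  assumes two: "(2::'a::{field,finite}) = 0" and ab: "a \<noteq> b" "a \<le> n" "b \<le> n" "n \<ge> 2"
  shows "good n (V (transpose a b) :: (nat \<Rightarrow> 'a) \<Rightarrow> _) \<and> ind n (V (transpose a b) :: (nat \<Rightarrow> 'a) \<Rightarrow> _) permutes proj_space n \<and>
         evenperm (ind n (V (transpose a b) :: (nat \<Rightarrow> 'a) \<Rightarrow> _))"
proof -
  define t where "t = transpose a b"
  define T :: "(nat \<Rightarrow> 'a) \<Rightarrow> _" where "T = V t"
  define k where "k = (if a \<noteq> 0 \<and> b \<noteq> 0 then 0 else if a \<noteq> 1 \<and> b \<noteq> 1 then 1 else (2::nat))"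
  have k: "k \<le> n" "k \<noteq> a" "k \<noteq> b" unfolding k_def using ab by auto
  define J :: "(nat \<Rightarrow> 'a) \<Rightarrow> (nat \<Rightarrow> 'a)" where
    "J v = (\<lambda>i. if i = k then v i + (v a + v b) else v i)" for v
  have tk: "t k = k" "t a = b" "t b = a" unfolding t_def using k by auto
  have tn: "i \<le> n \<Longrightarrow> t i \<le> n" for i unfolding t_def using ab by (auto simp: transpose_def)
  have tt: "t (t i) = i" for i unfolding t_def by simp
  have TT: "T (T v) = v" for v unfolding T_def V_def using tt by simp
  have goodT: "good n T"
  proof -
    have "v \<in> vecs n \<Longrightarrow> T v \<in> vecs n" for v
      unfolding T_def V_def vecs_def t_def using ab by (auto simp: transpose_def)
    moreover have "T v \<noteq> (\<lambda>_. 0)" if "v \<noteq> (\<lambda>_. 0)" for v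
    proof
      assume "T v = (\<lambda>_. 0)"
      then have "T (T v) = (\<lambda>_. 0)" by (simp add: T_def V_def)
      then show False using TT that by simp
    qed
    ultimately show ?thesis unfolding good_def T_def V_def by auto
  qed
  have goodJ: "good n J"
  proof -
    have "v \<in> vecs n \<Longrightarrow> J v \<in> vecs n" for v
      unfolding J_def vecs_def using k by auto
    moreover have "J v \<noteq> (\<lambda>_. 0)" if "v \<noteq> (\<lambda>_. 0)" for v
    proof
      assume "J v = (\<lambda>_. 0)"
      then have h: "\<forall>i. J v i = 0" by simp
      have va: "v a = 0" "v b = 0" using spec[OF h, of a] spec[OF h, of b] k by (simp_all add: J_def)
      have "v i = 0" for i using spec[OF h, of i] va by (simp add: J_def split: if_splits)
      then have "\<forall>i. v i = 0" by blast
      then show False using that by auto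
    qed
    moreover have "J (\<lambda>i. c * v i) = (\<lambda>i. c * J v i)" for c v
      unfolding J_def by (auto simp: fun_eq_iff algebra_simps)
    ultimately show ?thesis unfolding good_def by auto
  qed
  have JJ: "J (J v) = v" for v
  proof
    fix i
    have s: "(v a + v b) + (v a + v b) = 0" by (rule char2_neg[OF two])
    have "v k + (v a + v b) + (v a + v b) = v k" using s by (simp add: add.assoc)
    then show "J (J v) i = v i" unfolding J_def using k by auto
  qed
  have JT: "J (T v) = T (J v)" for v
  proof -
    have tik: "t i = k \<longleftrightarrow> i = k" for i by (metis tk(1) tt)
    show ?thesis unfolding J_def T_def V_def by (auto simp: fun_eq_iff tik tk add.commute)
  qed
  have Ja: "J v a = v a" "J v b = v b" for v unfolding J_def using k by auto
  have K: "proj_pt (T w) \<noteq> proj_pt w" if "w a \<noteq> w b" for w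
  proof
    assume "proj_pt (T w) = proj_pt w"
    then obtain c where hw: "w = (\<lambda>i. c * T w i)" using proj_pt_eq by blast
    have "w a = c * T w a" "w b = c * T w b" using fun_cong[OF hw, of a] fun_cong[OF hw, of b] by simp_all
    then have "w a = c * w b" "w b = c * w a" unfolding T_def V_def using tk by simp_all
    then show False using char2_c[OF two] that by blast
  qed
  let ?\<tau> = "ind n T" and ?\<iota> = "ind n J"
  have perm: "?\<tau> permutes proj_space n" using ind_permutes[OF goodT] TT by blast
  have "evenperm ?\<tau>"
  proof (rule inv_even_aux[where \<iota> = ?\<iota>])
    show "finite {x. ?\<tau> x \<noteq> x}"
      by (rule finite_subset[OF _ finite_proj_space[of n]]) (auto simp: ind_def)
    show "\<forall>x. ?\<tau> (?\<tau> x) = x" using ind_invol[OF goodT] TT by blast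
    show "\<forall>y. ?\<tau> y \<noteq> y \<longrightarrow> ?\<tau> (?\<iota> y) \<noteq> ?\<iota> y \<and> ?\<iota> (?\<iota> y) = y \<and> ?\<iota> y \<noteq> y \<and> ?\<iota> y \<noteq> ?\<tau> y \<and> ?\<iota> (?\<tau> y) = ?\<tau> (?\<iota> y)"
    proof (intro allI impI)
      fix y assume y: "?\<tau> y \<noteq> y"
      then have yP: "y \<in> proj_space n" unfolding ind_def by auto
      obtain v where v: "v \<in> vecs n" "v \<noteq> (\<lambda>_. 0)" "y = proj_pt v" using yP by (rule proj_spaceE)
      have hT: "\<forall>c v. T (\<lambda>i. c * v i) = (\<lambda>i. c * T v i)" using goodT unfolding good_def by blast
      have hJ: "\<forall>c v. J (\<lambda>i. c * v i) = (\<lambda>i. c * J v i)" using goodJ unfolding good_def by blast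
      have indv: "ind n L (proj_pt u) = proj_pt (L u)" if "good n L" "u \<in> vecs n" "u \<noteq> (\<lambda>_. 0)" for L u
      proof -
        have "proj_pt u \<in> proj_space n" using that unfolding proj_space_def by auto
        then show ?thesis using image_proj_pt[of L u] that unfolding ind_def good_def by auto
      qed
      have Jv: "J v \<in> vecs n" "J v \<noteq> (\<lambda>_. 0)" "T v \<in> vecs n" "T v \<noteq> (\<lambda>_. 0)"
        using goodJ goodT v unfolding good_def by auto
      have e1: "?\<tau> y = proj_pt (T v)" "?\<iota> y = proj_pt (J v)" using indv[OF goodT v(1,2)] indv[OF goodJ v(1,2)] v(3) by simp_all
      have e2: "?\<tau> (?\<iota> y) = proj_pt (T (J v))" "?\<iota> (?\<tau> y) = proj_pt (J (T v))"
        unfolding e1 using indv[OF goodT Jv(1,2)] indv[OF goodJ Jv(3,4)] by simp_all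
      have vab: "v a \<noteq> v b"
      proof
        assume "v a = v b"
        then have "T v = v" unfolding T_def V_def t_def by (auto simp: fun_eq_iff transpose_def)
        then show False using y e1 v by simp
      qed
      have c1: "?\<tau> (?\<iota> y) \<noteq> ?\<iota> y"
      proof -
        have "proj_pt (T (J v)) \<noteq> proj_pt (J v)" using K[of "J v"] Ja vab by simp
        then show ?thesis using e2(1) e1(2) by simp
      qed
      have c2: "?\<iota> (?\<iota> y) = y" using ind_invol[OF goodJ] JJ by blast
      have c3: "?\<iota> y \<noteq> y"
      proof
        assume "?\<iota> y = y"
        then have "proj_pt v = proj_pt (J v)" using e1 v by simp
        then obtain c where c: "c \<noteq> 0" "J v = (\<lambda>i. c * v i)" using proj_pt_eq by blast
        have h1: "J v a = c * v a" "J v b = c * v b" using fun_cong[OF c(2), of a] fun_cong[OF c(2), of b] by simp_all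
        then have "v a = c * v a" "v b = c * v b" using Ja[of v] by (simp_all only:)
        then have "c = 1" using vab by auto
        then have "J v k = v k" using fun_cong[OF c(2), of k] by simp
        then have "v a + v b = 0" unfolding J_def by simp
        then show False using vab char2_eq[OF two] by blast
      qed
      have c4: "?\<iota> y \<noteq> ?\<tau> y"
      proof
        assume "?\<iota> y = ?\<tau> y"
        then have "proj_pt (J v) = proj_pt (T v)" using e1 by simp
        then obtain c where c: "T v = (\<lambda>i. c * J v i)" using proj_pt_eq by blast
        have "T v a = c * J v a" "T v b = c * J v b" using fun_cong[OF c, of a] fun_cong[OF c, of b] by simp_all
        then have "v b = c * v a" "v a = c * v b" using Ja tk unfolding T_def V_def by simp_all
        then show False using char2_c[OF two, of "v b" c "v a"] vab by simp
      qed
      have c5: "?\<iota> (?\<tau> y) = ?\<tau> (?\<iota> y)" using e2 JT by simp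
      show "?\<tau> (?\<iota> y) \<noteq> ?\<iota> y \<and> ?\<iota> (?\<iota> y) = y \<and> ?\<iota> y \<noteq> y \<and> ?\<iota> y \<noteq> ?\<tau> y \<and> ?\<iota> (?\<tau> y) = ?\<tau> (?\<iota> y)"
        using c1 c2 c3 c4 c5 by blast
    qed
  qed (rule refl)
  then show ?thesis using perm goodT unfolding T_def t_def by simp
qed

definition sh :: "nat \<Rightarrow> nat \<Rightarrow> nat" where
  "sh k i = (if i < k then Suc i else if i = k then 0 else i)"

lemma sh_Suc: "sh (Suc k) = sh k \<circ> transpose k (Suc k)"
  by (auto simp: fun_eq_iff sh_def transpose_def)

lemma sh_0: "sh 0 = id"
  by (auto simp: fun_eq_iff sh_def)

lemma V_comp: "V (f \<circ> g) = V g \<circ> V f"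
  by (auto simp: fun_eq_iff V_def)

lemma V_id: "V id = id"
  by (auto simp: fun_eq_iff V_def)

lemma shift_even:
  assumes two: "(2::'a::{field,finite}) = 0" and n: "n \<ge> 2"
  shows "k \<le> n \<Longrightarrow> good n (V (sh k) :: (nat \<Rightarrow> 'a) \<Rightarrow> _) \<and> ind n (V (sh k) :: (nat \<Rightarrow> 'a) \<Rightarrow> _) permutes proj_space n \<and>
         evenperm (ind n (V (sh k) :: (nat \<Rightarrow> 'a) \<Rightarrow> _))"
proof (induction k)
  case 0
  have i: "ind n (id :: (nat \<Rightarrow> 'a) \<Rightarrow> _) = id" by (auto simp: fun_eq_iff ind_def)
  have "good n (id :: (nat \<Rightarrow> 'a) \<Rightarrow> _)" unfolding good_def by simp
  moreover have "id permutes proj_space n" by (rule permutes_id)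
  ultimately show ?case unfolding sh_0 V_id i by (simp only: evenperm_id)
next
  case (Suc k)
  then have IH: "good n (V (sh k) :: (nat \<Rightarrow> 'a) \<Rightarrow> _)" "ind n (V (sh k) :: (nat \<Rightarrow> 'a) \<Rightarrow> _) permutes proj_space n"
    "evenperm (ind n (V (sh k) :: (nat \<Rightarrow> 'a) \<Rightarrow> _))" by auto
  have S: "good n (V (transpose k (Suc k)) :: (nat \<Rightarrow> 'a) \<Rightarrow> _)"
     "ind n (V (transpose k (Suc k)) :: (nat \<Rightarrow> 'a) \<Rightarrow> _) permutes proj_space n"
     "evenperm (ind n (V (transpose k (Suc k)) :: (nat \<Rightarrow> 'a) \<Rightarrow> _))"
    using swap_even[OF two, of k "Suc k" n] Suc.prems n by auto
  have eq: "ind n (V (sh (Suc k)) :: (nat \<Rightarrow> 'a) \<Rightarrow> _) =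
      ind n (V (transpose k (Suc k))) \<circ> ind n (V (sh k))"
    unfolding sh_Suc V_comp by (rule ind_comp[OF IH(1)])
  have g: "good n (V (sh (Suc k)) :: (nat \<Rightarrow> 'a) \<Rightarrow> _)"
    unfolding sh_Suc V_comp by (rule good_comp[OF IH(1) S(1)])
  have p: "ind n (V (sh (Suc k)) :: (nat \<Rightarrow> 'a) \<Rightarrow> _) permutes proj_space n"
    unfolding eq by (rule permutes_compose[OF IH(2) S(2)])
  have pp1: "permutation (ind n (V (sh k) :: (nat \<Rightarrow> 'a) \<Rightarrow> _))"
    using IH(2) finite_proj_space permutation_permutes by blast
  have pp2: "permutation (ind n (V (transpose k (Suc k)) :: (nat \<Rightarrow> 'a) \<Rightarrow> _))"
    using S(2) finite_proj_space permutation_permutes by blast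
  have e: "evenperm (ind n (V (sh (Suc k)) :: (nat \<Rightarrow> 'a) \<Rightarrow> _))"
    unfolding eq using evenperm_comp[OF pp2 pp1] IH(3) S(3) by blast
  show ?case using g p e by blast
qed

lemma matvec_B:
  assumes "v \<in> vecs n"
  shows "mat_vec n (Bmat n) v = V (sh n) (v :: nat \<Rightarrow> 'a::field)"
proof
  fix i
  show "mat_vec n (Bmat n) v i = V (sh n) v i"
  proof (cases "i \<le> n")
    case True
    have m: "Suc i mod Suc n \<le> n" using mod_less_divisor[of "Suc n" "Suc i"] by simp
    have "(\<Sum>j\<le>n. Bmat n i j * v j) = (\<Sum>j\<le>n. if j = Suc i mod Suc n then v j else 0)"
      by (rule sum.cong) (use True in \<open>auto simp: Bmat_def\<close>)
    also have "\<dots> = v (Suc i mod Suc n)" using m by (simp add: sum.delta')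
    also have "Suc i mod Suc n = sh n i"
    proof (cases "i < n")
      case True then show ?thesis by (simp add: sh_def)
    next
      case False then have "i = n" using \<open>i \<le> n\<close> by simp
      then show ?thesis by (simp add: sh_def)
    qed
    finally show ?thesis using True by (simp add: mat_vec_def V_def)
  next
    case False
    then show ?thesis using assms by (simp add: mat_vec_def V_def sh_def vecs_def)
  qed
qed

theorem lemma3p3:
  fixes n m :: nat
  assumes "n \<ge> 2"
    and "card (UNIV :: 'a::{field,finite} set) = 2 ^ m"
    and "(2::nat) ^ m \<ge> 4"
  shows "induced_perm n (Bmat n :: nat \<Rightarrow> nat \<Rightarrow> 'a) permutes proj_space n
         \<and> evenperm (induced_perm n (Bmat n :: nat \<Rightarrow> nat \<Rightarrow> 'a))"
proof -
  have "m > 0" using assms(3) by (cases m) auto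
  then have two: "(2::'a) = 0" using char2 assms(2) by blast
  have eq: "induced_perm n (Bmat n :: nat \<Rightarrow> nat \<Rightarrow> 'a) = ind n (V (sh n))"
  proof
    fix S :: "(nat \<Rightarrow> 'a) set"
    show "induced_perm n (Bmat n) S = ind n (V (sh n)) S"
    proof (cases "S \<in> proj_space n")
      case True
      have "mat_vec n (Bmat n) ` S = V (sh n) ` S"
        by (rule image_cong[OF refl]) (use True proj_space_vecs matvec_B in blast)
      then show ?thesis using True unfolding induced_perm_def ind_def by simp
    next
      case False
      then show ?thesis unfolding induced_perm_def ind_def by simp
    qed
  qed
  show ?thesis unfolding eq using shift_even[OF two assms(1), of n] by simp
qed

end
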